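(* Let $S$ be a connected graded reduced affine monoid and $R$ a commutative ring with identity. Then $c_{\mathrm{gr}}(S)=\mu(\ker(\pi_R))$, where the polynomial ring $R[x_a\mid a\in\mathcal{A}(S)]$ is graded by $\deg x_a=|a|$, so that $\pi_R$ is a homomorphism of graded algebras.
   Context: A monoid is a commutative cancellative semigroup with identity; affine means a finitely generated submonoid of a finitely generated free abelian group; reduced means the identity is the only unit. $S$ is graded if $S=\bigsqcup_{d\in\mathbb{N}_0}S_d$ with $S_dS_e\subseteq S_{d+e}$; $|s|=d$ for $s\in S_d$; connected graded means $S_0=\{1\}$. $\mathcal{A}(S)$ is the finite set of atoms, $a^{\alpha}=\prod_a a^{\alpha(a)}$. $R[S]$ is the semigroup ring, graded by the grading of $S$, and $\pi_R:R[x_a\mid a\in\mathcal{A}(S)]\to R[S]$ is the $R$-algebra homomorphism $x^{\alpha}\mapsto a^{\alpha}$. For an ideal $I$ of the graded polynomial ring, $\mu(I)$ is the minimal non-negative integer $d$ such that $I$ is generated by elements of degree at most $d$. The graded catenary degree: set $|\alpha|_{\mathrm{gr}}=\sum_a\alpha(a)|a|$, $\gcd(\alpha,\gamma)(a)=\min\{\alpha(a),\gamma(a)\}$, $d_{\mathrm{gr}}(\alpha,\gamma)=\max\{|\alpha-\gcd(\alpha,\gamma)|_{\mathrm{gr}},|\gamma-\gcd(\alpha,\gamma)|_{\mathrm{gr}}\}$; $c_{\mathrm{gr}}(S)$ is the minimal $d$ such that whenever $a^{\alpha}=a^{\gamma}$ there is a sequence $\alpha=\alpha^{(0)},\dots,\alpha^{(k)}=\gamma$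 with $a^{\alpha^{(j)}}=a^{\alpha^{(j+1)}}$ and $d_{\mathrm{gr}}(\alpha^{(j)},\alpha^{(j+1)})\le d$ for all $j$. *)

theory Defs
  imports Main "HOL-Library.Poly_Mapping" "HOL-Library.Function_Algebras"
begin

text \<open>The ambient finitely generated free abelian group is Z^n, modelled as
  functions 'n => int for a finite index type 'n; the monoid operation of S
  is written additively (identity 0).\<close>

definition mon_closed :: "('n \<Rightarrow> int) set \<Rightarrow> bool" where
  "mon_closed S \<longleftrightarrow> 0 \<in> S \<and> (\<forall>x\<in>S. \<forall>y\<in>S. x + y \<in> S)"

definition affine_monoid :: "('n::finite \<Rightarrow> int) set \<Rightarrow> bool" where
  "affine_monoid S \<longleftrightarrow> mon_closed S \<and>
     (\<exists>G. finite G \<and> G \<subseteq> S \<and>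
        S = range (\<lambda>c :: ('n \<Rightarrow> int) \<Rightarrow> nat. \<Sum>g\<in>G. (\<lambda>i. int (c g) * g i)))"

definition units_of_mon :: "('n \<Rightarrow> int) set \<Rightarrow> ('n \<Rightarrow> int) set" where
  "units_of_mon S = {u \<in> S. \<exists>v\<in>S. u + v = 0}"

definition reduced_monoid :: "('n \<Rightarrow> int) set \<Rightarrow> bool" where
  "reduced_monoid S \<longleftrightarrow> units_of_mon S = {0}"

text \<open>A grading of S is given by the degree function deg (s is in S_d iff deg s = d).\<close>
definition graded_monoid :: "('n \<Rightarrow> int) set \<Rightarrow> (('n \<Rightarrow> int) \<Rightarrow> nat) \<Rightarrow> bool" where
  "graded_monoid S deg \<longleftrightarrow> (\<forall>x\<in>S. \<forall>y\<in>S. deg (x + y) = deg x + deg y)"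

definition connected_graded :: "('n \<Rightarrow> int) set \<Rightarrow> (('n \<Rightarrow> int) \<Rightarrow> nat) \<Rightarrow> bool" where
  "connected_graded S deg \<longleftrightarrow> graded_monoid S deg \<and> {s \<in> S. deg s = 0} = {0}"

definition atoms :: "('n \<Rightarrow> int) set \<Rightarrow> ('n \<Rightarrow> int) set" where
  "atoms S = {a \<in> S. a \<notin> units_of_mon S \<and>
      (\<forall>x\<in>S. \<forall>y\<in>S. a = x + y \<longrightarrow> x \<in> units_of_mon S \<or> y \<in> units_of_mon S)}"

definition is_fact :: "('n \<Rightarrow> int) set \<Rightarrow> (('n \<Rightarrow> int) \<Rightarrow>\<^sub>0 nat) \<Rightarrow> bool" where
  "is_fact S \<alpha> \<longleftrightarrow> Poly_Mapping.keys \<alpha> \<subseteq> atoms S"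

definition atom_pow :: "(('n \<Rightarrow> int) \<Rightarrow>\<^sub>0 nat) \<Rightarrow> ('n \<Rightarrow> int)" where
  "atom_pow \<alpha> = (\<Sum>a\<in>Poly_Mapping.keys \<alpha>. (\<lambda>i. int (Poly_Mapping.lookup \<alpha> a) * a i))"

definition gr_len :: "(('n \<Rightarrow> int) \<Rightarrow> nat) \<Rightarrow> (('n \<Rightarrow> int) \<Rightarrow>\<^sub>0 nat) \<Rightarrow> nat" where
  "gr_len deg \<alpha> = (\<Sum>a\<in>Poly_Mapping.keys \<alpha>. Poly_Mapping.lookup \<alpha> a * deg a)"

text \<open>|alpha - gcd(alpha,gamma)|_gr, written out.\<close>
definition gr_len_diff :: "(('n \<Rightarrow> int) \<Rightarrow> nat) \<Rightarrow> (('n \<Rightarrow> int) \<Rightarrow>\<^sub>0 nat) \<Rightarrow> (('n \<Rightarrow> int) \<Rightarrow>\<^sub>0 nat) \<Rightarrow> nat" where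
  "gr_len_diff deg \<alpha> \<gamma> = (\<Sum>a\<in>Poly_Mapping.keys \<alpha>. (Poly_Mapping.lookup \<alpha> a - min (Poly_Mapping.lookup \<alpha> a) (Poly_Mapping.lookup \<gamma> a)) * deg a)"

definition d_gr :: "(('n \<Rightarrow> int) \<Rightarrow> nat) \<Rightarrow> (('n \<Rightarrow> int) \<Rightarrow>\<^sub>0 nat) \<Rightarrow> (('n \<Rightarrow> int) \<Rightarrow>\<^sub>0 nat) \<Rightarrow> nat" where
  "d_gr deg \<alpha> \<gamma> = max (gr_len_diff deg \<alpha> \<gamma>) (gr_len_diff deg \<gamma> \<alpha>)"

definition cgr_bound :: "('n \<Rightarrow> int) set \<Rightarrow> (('n \<Rightarrow> int) \<Rightarrow> nat) \<Rightarrow> nat \<Rightarrow> bool" where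
  "cgr_bound S deg d \<longleftrightarrow>
     (\<forall>\<alpha> \<gamma>. is_fact S \<alpha> \<and> is_fact S \<gamma> \<and> atom_pow \<alpha> = atom_pow \<gamma> \<longrightarrow>
        (\<exists>cs. cs \<noteq> [] \<and> hd cs = \<alpha> \<and> last cs = \<gamma> \<and> (\<forall>\<beta>\<in>set cs. is_fact S \<beta>) \<and>
           (\<forall>j. Suc j < length cs \<longrightarrow>
              atom_pow (cs ! j) = atom_pow (cs ! Suc j) \<and> d_gr deg (cs ! j) (cs ! Suc j) \<le> d)))"

definition c_gr :: "('n \<Rightarrow> int) set \<Rightarrow> (('n \<Rightarrow> int) \<Rightarrow> nat) \<Rightarrow> nat" where
  "c_gr S deg = (LEAST d. cgr_bound S deg d)"

text \<open>The polynomial ring R[x_a | a in A(S)]: polynomials are finitely supported maps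
  from exponent vectors to coefficients (Poly_Mapping convolution product), with
  all variables among the atoms.\<close>
type_synonym ('n, 'r) mpoly = "((('n \<Rightarrow> int) \<Rightarrow>\<^sub>0 nat) \<Rightarrow>\<^sub>0 'r)"

definition poly_ring :: "('n \<Rightarrow> int) set \<Rightarrow> ('n, 'r::comm_ring_1) mpoly set" where
  "poly_ring S = {p. \<forall>\<alpha>\<in>Poly_Mapping.keys p. is_fact S \<alpha>}"

text \<open>The semigroup ring R[S] as finitely supported maps S -> R; pi_R.\<close>
definition pi_R :: "('n, 'r::comm_ring_1) mpoly \<Rightarrow> (('n \<Rightarrow> int) \<Rightarrow>\<^sub>0 'r)" where
  "pi_R p = (\<Sum>\<alpha>\<in>Poly_Mapping.keys p. Poly_Mapping.single (atom_pow \<alpha>) (Poly_Mapping.lookup p \<alpha>))"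

definition ker_pi :: "('n \<Rightarrow> int) set \<Rightarrow> ('n, 'r::comm_ring_1) mpoly set" where
  "ker_pi S = {p \<in> poly_ring S. pi_R p = 0}"

definition homogeneous :: "(('n \<Rightarrow> int) \<Rightarrow> nat) \<Rightarrow> nat \<Rightarrow> ('n, 'r::comm_ring_1) mpoly \<Rightarrow> bool" where
  "homogeneous deg e p \<longleftrightarrow> (\<forall>\<alpha>\<in>Poly_Mapping.keys p. gr_len deg \<alpha> = e)"

definition ideal_gen :: "('n \<Rightarrow> int) set \<Rightarrow> ('n, 'r::comm_ring_1) mpoly set \<Rightarrow> ('n, 'r) mpoly set" where
  "ideal_gen S G = {\<Sum>g\<in>H. c g * g | H c. finite H \<and> H \<subseteq> G \<and> (\<forall>g\<in>H. c g \<in> poly_ring S)}"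

definition mu :: "('n \<Rightarrow> int) set \<Rightarrow> (('n \<Rightarrow> int) \<Rightarrow> nat) \<Rightarrow> ('n, 'r::comm_ring_1) mpoly set \<Rightarrow> nat" where
  "mu S deg I = (LEAST d. I = ideal_gen S {p \<in> I. \<exists>e\<le>d. homogeneous deg e p})"

end

theory Submission
  imports Defs
begin

abbreviation lk where "lk \<equiv> Poly_Mapping.lookup"
abbreviation ks where "ks \<equiv> Poly_Mapping.keys"

lemma atom_pow_sum:
  assumes "finite K" "ks \<alpha> \<subseteq> K"
  shows "atom_pow \<alpha> = (\<Sum>a\<in>K. (\<lambda>i. int (lk \<alpha> a) * a i))"
  unfolding atom_pow_def
  by (rule sum.mono_neutral_left) (use assms in \<open>auto simp: in_keys_iff fun_eq_iff\<close>)

lemma atom_pow_add: "atom_pow (\<alpha> + \<beta>) = atom_pow \<alpha> + atom_pow \<beta>"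
proof -
  let ?K = "ks \<alpha> \<union> ks \<beta>"
  have "atom_pow (\<alpha> + \<beta>) = (\<Sum>a\<in>?K. (\<lambda>i. int (lk (\<alpha>+\<beta>) a) * a i))"
    by (rule atom_pow_sum) (simp_all add: keys_add)
  also have "\<dots> = (\<Sum>a\<in>?K. (\<lambda>i. int (lk \<alpha> a) * a i) + (\<lambda>i. int (lk \<beta> a) * a i))"
    by (rule sum.cong) (auto simp: lookup_add fun_eq_iff algebra_simps)
  also have "\<dots> = atom_pow \<alpha> + atom_pow \<beta>"
  proof -
    have a: "atom_pow \<alpha> = (\<Sum>a\<in>?K. (\<lambda>i. int (lk \<alpha> a) * a i))" by (rule atom_pow_sum) auto
    have b: "atom_pow \<beta> = (\<Sum>a\<in>?K. (\<lambda>i. int (lk \<beta> a) * a i))" by (rule atom_pow_sum) auto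
    show ?thesis by (simp only: a b sum.distrib)
  qed
  finally show ?thesis .
qed

lemma atom_pow_0[simp]: "atom_pow 0 = 0"
  by (simp add: atom_pow_def)

lemma gr_len_sum:
  assumes "finite K" "ks \<alpha> \<subseteq> K"
  shows "gr_len deg \<alpha> = (\<Sum>a\<in>K. lk \<alpha> a * deg a)"
  unfolding gr_len_def
  by (rule sum.mono_neutral_left) (use assms in \<open>auto simp: in_keys_iff\<close>)

lemma gr_len_add: "gr_len deg (\<alpha> + \<beta>) = gr_len deg \<alpha> + gr_len deg \<beta>"
proof -
  let ?K = "ks \<alpha> \<union> ks \<beta>"
  have "gr_len deg (\<alpha> + \<beta>) = (\<Sum>a\<in>?K. lk (\<alpha>+\<beta>) a * deg a)"
    by (rule gr_len_sum) (simp_all add: keys_add)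
  also have "\<dots> = (\<Sum>a\<in>?K. lk \<alpha> a * deg a + lk \<beta> a * deg a)"
    by (rule sum.cong) (auto simp: lookup_add algebra_simps)
  also have "\<dots> = gr_len deg \<alpha> + gr_len deg \<beta>"
  proof -
    have a: "gr_len deg \<alpha> = (\<Sum>a\<in>?K. lk \<alpha> a * deg a)" by (rule gr_len_sum) auto
    have b: "gr_len deg \<beta> = (\<Sum>a\<in>?K. lk \<beta> a * deg a)" by (rule gr_len_sum) auto
    show ?thesis by (simp only: a b sum.distrib)
  qed
  finally show ?thesis .
qed

lemma gr_len_diff_sum:
  assumes "finite K" "ks \<alpha> \<subseteq> K"
  shows "gr_len_diff deg \<alpha> \<gamma> = (\<Sum>a\<in>K. (lk \<alpha> a - min (lk \<alpha> a) (lk \<gamma> a)) * deg a)"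
  unfolding gr_len_diff_def
  by (rule sum.mono_neutral_left) (use assms in \<open>auto simp: in_keys_iff\<close>)

lemma gr_len_diff_le: "gr_len_diff deg \<alpha> \<gamma> \<le> gr_len deg \<alpha>"
  unfolding gr_len_diff_def gr_len_def by (rule sum_mono) auto

lemma lookup_minus_nat: "lk (\<alpha> - \<beta>) a = lk \<alpha> a - lk \<beta> (a::'a) " for \<alpha> \<beta> :: "'a \<Rightarrow>\<^sub>0 nat"
  by (rule lookup_minus)

lemma is_fact_add: "is_fact S \<alpha> \<Longrightarrow> is_fact S \<beta> \<Longrightarrow> is_fact S (\<alpha> + \<beta>)"
  unfolding is_fact_def using keys_add[of \<alpha> \<beta>] by (meson le_sup_iff order_trans)

lemma is_fact_minus: "is_fact S \<alpha> \<Longrightarrow> is_fact S (\<alpha> - \<beta>)"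
  unfolding is_fact_def by (auto simp: in_keys_iff lookup_minus_nat)

lemma is_fact_0[simp]: "is_fact S 0"
  unfolding is_fact_def by simp


definition supp_in :: "'i set \<Rightarrow> ('i \<Rightarrow> nat) set" where
  "supp_in I = {f. \<forall>i. i \<notin> I \<longrightarrow> f i = 0}"

lemma le_from_proj:
  fixes f g :: "'i \<Rightarrow> nat"
  assumes "f(j:=0) \<le> g(j:=0)" "f j \<le> g j"
  shows "f \<le> g"
  unfolding le_fun_def
proof
  fix x show "f x \<le> g x"
  proof (cases "x = j")
    case True then show ?thesis using assms(2) by simp
  next
    case False then show ?thesis using assms(1) unfolding le_fun_def
      by (metis fun_upd_other)
  qed
qed

lemma dickson_aux:
  assumes "finite I"
  shows "\<forall>U. U \<subseteq> supp_in I \<longrightarrow> (\<exists>B. finite B \<and> B \<subseteq> U \<and> (\<forall>u\<in>U. \<exists>b\<in>B. b \<le> u))"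
  using assms
proof (induction I rule: finite_induct)
  case empty
  show ?case
  proof (intro allI impI)
    fix U :: "('a \<Rightarrow> nat) set" assume U: "U \<subseteq> supp_in {}"
    have "U \<subseteq> {\<lambda>_. 0}"
    proof
      fix u assume "u \<in> U"
      then have "\<forall>i. u i = 0" using U unfolding supp_in_def by auto
      then show "u \<in> {\<lambda>_. 0}" by (simp add: fun_eq_iff)
    qed
    then have "finite U" using finite_subset by auto
    then show "\<exists>B. finite B \<and> B \<subseteq> U \<and> (\<forall>u\<in>U. \<exists>b\<in>B. b \<le> u)"
      by (intro exI[of _ U]) auto
  qed
next
  case (insert j I)
  show ?case
  proof (intro allI impI)
    fix U :: "('a \<Rightarrow> nat) set" assume U: "U \<subseteq> supp_in (insert j I)"
    let ?p = "\<lambda>f::'a \<Rightarrow> nat. f(j:=0)"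
    have ps: "?p ` V \<subseteq> supp_in I" if VU0: "V \<subseteq> U" for V
    proof
      fix g assume "g \<in> ?p ` V"
      then obtain f where f: "f \<in> U" "g = ?p f" using VU0 by blast
      then have "\<forall>i. i \<notin> insert j I \<longrightarrow> f i = 0" using U unfolding supp_in_def by blast
      then show "g \<in> supp_in I" unfolding supp_in_def f(2) by simp
    qed
    obtain B' where B': "finite B'" "B' \<subseteq> ?p ` U" "\<forall>u\<in>?p ` U. \<exists>b\<in>B'. b \<le> u"
      using insert.IH[rule_format, OF ps[OF order_refl]] by (elim exE conjE)
    have exL: "\<forall>b\<in>B'. \<exists>f. f \<in> U \<and> ?p f = b" using B'(2) by blast
    from bchoice[OF exL] obtain L where L: "\<forall>b\<in>B'. L b \<in> U \<and> ?p (L b) = b" by blast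
    define M where "M = Max (insert 0 ((\<lambda>b. L b j) ` B'))"
    have LM: "L b j \<le> M" if "b \<in> B'" for b
      unfolding M_def using B'(1) that by (intro Max_ge) auto
    have slice: "\<exists>C. finite C \<and> C \<subseteq> U \<and> (\<forall>u\<in>U. u j = k \<longrightarrow> (\<exists>c\<in>C. c \<le> u))" for k
    proof -
      let ?V = "{f\<in>U. f j = k}"
      have VU: "?V \<subseteq> U" by blast
      obtain Bk where Bk: "finite Bk" "Bk \<subseteq> ?p ` ?V" "\<forall>u\<in>?p ` ?V. \<exists>b\<in>Bk. b \<le> u"
        using insert.IH[rule_format, OF ps[OF VU]] by (elim exE conjE)
      have exL: "\<forall>b\<in>Bk. \<exists>f. f \<in> ?V \<and> ?p f = b" using Bk(2) by blast
      from bchoice[OF exL] obtain Lk where Lk: "\<forall>b\<in>Bk. Lk b \<in> ?V \<and> ?p (Lk b) = b" by blast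
      show ?thesis
      proof (intro exI conjI)
        show "finite (Lk ` Bk)" using Bk(1) by simp
        show "Lk ` Bk \<subseteq> U" using Lk by auto
        show "\<forall>u\<in>U. u j = k \<longrightarrow> (\<exists>c\<in>Lk ` Bk. c \<le> u)"
        proof (intro ballI impI)
          fix u assume u: "u \<in> U" "u j = k"
          then have "?p u \<in> ?p ` ?V" by blast
          then obtain b where b: "b \<in> Bk" "b \<le> ?p u" using Bk(3) by blast
          have "Lk b \<le> u"
            by (rule le_from_proj[where j=j]) (use Lk b u in auto)
          then show "\<exists>c\<in>Lk ` Bk. c \<le> u" using b(1) by blast
        qed
      qed
    qed
    then have exC: "\<forall>k. \<exists>C. finite C \<and> C \<subseteq> U \<and> (\<forall>u\<in>U. u j = k \<longrightarrow> (\<exists>c\<in>C. c \<le> u))" by blast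
    from choice[OF exC] obtain C where C0: "\<forall>k. finite (C k) \<and> C k \<subseteq> U \<and> (\<forall>u\<in>U. u j = k \<longrightarrow> (\<exists>c\<in>C k. c \<le> u))"
      by blast
    then have C: "finite (C k)" "C k \<subseteq> U" "\<And>u. u\<in>U \<Longrightarrow> u j = k \<Longrightarrow> (\<exists>c\<in>C k. c \<le> u)" for k by auto
    show "\<exists>B. finite B \<and> B \<subseteq> U \<and> (\<forall>u\<in>U. \<exists>b\<in>B. b \<le> u)"
    proof (intro exI conjI)
      show "finite (L ` B' \<union> (\<Union>k<M. C k))" using B'(1) C(1) by auto
      show "L ` B' \<union> (\<Union>k<M. C k) \<subseteq> U" using L C(2) by auto
      show "\<forall>u\<in>U. \<exists>b\<in>L ` B' \<union> (\<Union>k<M. C k). b \<le> u"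
      proof
        fix u assume u: "u \<in> U"
        show "\<exists>b\<in>L ` B' \<union> (\<Union>k<M. C k). b \<le> u"
        proof (cases "u j < M")
          case True
          then obtain c where "c \<in> C (u j)" "c \<le> u" using C(3)[OF u] by blast
          then show ?thesis using True by blast
        next
          case False
          obtain b where b: "b \<in> B'" "b \<le> ?p u" using B'(3) u by blast
          have "L b \<le> u"
            by (rule le_from_proj[where j=j]) (use L b LM[OF b(1)] False in auto)
          then show ?thesis using b(1) by blast
        qed
      qed
    qed
  qed
qed

lemma dickson:
  assumes "finite I" "U \<subseteq> supp_in I"
  shows "\<exists>B. finite B \<and> B \<subseteq> U \<and> (\<forall>u\<in>U. \<exists>b\<in>B. b \<le> u)"
  using dickson_aux[OF assms(1)] assms(2) by blast


locale grmon =
  fixes S :: "('n::finite \<Rightarrow> int) set" and deg :: "('n \<Rightarrow> int) \<Rightarrow> nat"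
  assumes aff: "affine_monoid S" and red: "reduced_monoid S" and conn: "connected_graded S deg"
begin

lemma zero_in: "0 \<in> S" and add_in: "x \<in> S \<Longrightarrow> y \<in> S \<Longrightarrow> x + y \<in> S"
proof -
  have "mon_closed S" using aff unfolding affine_monoid_def by (rule conjunct1)
  then show "0 \<in> S" "x \<in> S \<Longrightarrow> y \<in> S \<Longrightarrow> x + y \<in> S"
    unfolding mon_closed_def by blast+
qed

lemma deg_add: "x \<in> S \<Longrightarrow> y \<in> S \<Longrightarrow> deg (x + y) = deg x + deg y"
proof -
  have "graded_monoid S deg" using conn unfolding connected_graded_def by (rule conjunct1)
  then show "x \<in> S \<Longrightarrow> y \<in> S \<Longrightarrow> deg (x + y) = deg x + deg y"
    unfolding graded_monoid_def by simp
qed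

lemma deg0: "deg 0 = 0"
  using deg_add[OF zero_in zero_in] by simp

lemma deg_pos: "x \<in> S \<Longrightarrow> x \<noteq> 0 \<Longrightarrow> deg x > 0"
proof -
  have e: "{s \<in> S. deg s = 0} = {0}" using conn unfolding connected_graded_def by (rule conjunct2)
  assume "x \<in> S" "x \<noteq> 0"
  then have "x \<notin> {s \<in> S. deg s = 0}" using e by simp
  then show "deg x > 0" using \<open>x \<in> S\<close> by simp
qed

lemma units: "units_of_mon S = {0}"
  using red unfolding reduced_monoid_def by assumption

lemma atom_in: "a \<in> atoms S \<Longrightarrow> a \<in> S"
  unfolding atoms_def by auto

lemma atom_nz: "a \<in> atoms S \<Longrightarrow> a \<noteq> 0"
  unfolding atoms_def using units by auto

lemma atom_deg: "a \<in> atoms S \<Longrightarrow> deg a > 0"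
  using atom_in atom_nz deg_pos by blast

lemma smul_in:
  assumes "a \<in> S"
  shows "(\<lambda>i. int k * a i) \<in> S \<and> deg (\<lambda>i. int k * a i) = k * deg a"
proof (induction k)
  case 0
  have "(\<lambda>i. int 0 * a i) = 0" by (simp add: fun_eq_iff)
  then show ?case using zero_in deg0 by simp
next
  case (Suc k)
  have e: "(\<lambda>i. int (Suc k) * a i) = a + (\<lambda>i. int k * a i)"
    by (auto simp: fun_eq_iff algebra_simps)
  from Suc.IH have h1: "(\<lambda>i. int k * a i) \<in> S" and h2: "deg (\<lambda>i. int k * a i) = k * deg a"
    by auto
  show ?case unfolding e using add_in[OF assms h1] deg_add[OF assms h1] h2 by simp
qed

lemma lin_in:
  assumes "finite K" "K \<subseteq> S"
  shows "(\<Sum>a\<in>K. (\<lambda>i. int (f a) * a i)) \<in> S \<and> deg (\<Sum>a\<in>K. (\<lambda>i. int (f a) * a i)) = (\<Sum>a\<in>K. f a * deg a)"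
  using assms
proof (induction K rule: finite_induct)
  case empty
  have z: "(\<lambda>i::'n. 0::int) = 0" by (simp add: fun_eq_iff)
  show ?case using zero_in deg0 by (simp add: z)
next
  case (insert x F)
  let ?t = "\<lambda>a. (\<lambda>i. int (f a) * a i)"
  have xS: "x \<in> S" and FS: "F \<subseteq> S" using insert.prems by auto
  from insert.IH[OF FS] have h1: "sum ?t F \<in> S" and h2: "deg (sum ?t F) = (\<Sum>a\<in>F. f a * deg a)"
    by auto
  from smul_in[OF xS, of "f x"] have h3: "?t x \<in> S" and h4: "deg (?t x) = f x * deg x" by auto
  have e: "sum ?t (insert x F) = ?t x + sum ?t F" using insert.hyps by (rule sum.insert)
  have d: "deg (?t x + sum ?t F) = f x * deg x + (\<Sum>a\<in>F. f a * deg a)"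
    using deg_add[OF h3 h1] h2 h4 by (simp only:)
  show ?case unfolding e sum.insert[OF insert.hyps] by (rule conjI[OF add_in[OF h3 h1] d])
qed

lemma fact_in:
  assumes "is_fact S \<alpha>"
  shows "atom_pow \<alpha> \<in> S" "deg (atom_pow \<alpha>) = gr_len deg \<alpha>"
  using lin_in[of "ks \<alpha>" "lk \<alpha>"] assms atom_in unfolding is_fact_def atom_pow_def gr_len_def
  by auto

lemma gr_len_pos:
  assumes "is_fact S \<alpha>" "\<alpha> \<noteq> 0"
  shows "gr_len deg \<alpha> > 0"
proof -
  obtain a where a: "a \<in> ks \<alpha>" using assms(2)
    by (metis keys_eq_empty ex_in_conv)
  moreover have "a \<in> atoms S" using a assms(1) unfolding is_fact_def by blast
  ultimately have "lk \<alpha> a * deg a > 0" using atom_deg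
    by (auto simp: in_keys_iff)
  moreover have "lk \<alpha> a * deg a \<le> gr_len deg \<alpha>"
    unfolding gr_len_def using a by (intro member_le_sum) auto
  ultimately show ?thesis by linarith
qed

lemma atoms_finite: "finite (atoms S)"
proof -
  obtain G where G: "finite G" "G \<subseteq> S"
    "S = range (\<lambda>c :: ('n \<Rightarrow> int) \<Rightarrow> nat. \<Sum>g\<in>G. (\<lambda>i. int (c g) * g i))"
    using aff unfolding affine_monoid_def by (elim conjE exE) 
  have "atoms S \<subseteq> G"
  proof
    fix a assume a: "a \<in> atoms S"
    have "a \<in> S" by (rule atom_in[OF a])
    then have "a \<in> range (\<lambda>c :: ('n \<Rightarrow> int) \<Rightarrow> nat. \<Sum>g\<in>G. (\<lambda>i. int (c g) * g i))"
      by (subst (asm) G(3))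
    then obtain c where c: "a = (\<Sum>g\<in>G. (\<lambda>i. int (c g) * g i))" by (rule rangeE)
    have "\<exists>g\<in>G. c g > 0 \<and> g \<noteq> 0"
    proof (rule ccontr)
      assume "\<not> ?thesis"
      then have "\<forall>g\<in>G. (\<lambda>i. int (c g) * g i) = 0" by (auto simp: fun_eq_iff)
      then have "a = 0" using c by simp
      then show False using atom_nz a by blast
    qed
    then obtain g where g: "g \<in> G" "c g > 0" "g \<noteq> 0" by blast
    define c' where "c' = c(g := c g - 1)"
    let ?r = "(\<Sum>h\<in>G. (\<lambda>i. int (c' h) * h i))"
    have s1: "(\<Sum>h\<in>G. (\<lambda>i. int (c h) * h i)) = (\<lambda>i. int (c g) * g i) + (\<Sum>h\<in>G-{g}. (\<lambda>i. int (c h) * h i))"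
      using G(1) g(1) by (rule sum.remove)
    have s2: "?r = (\<lambda>i. int (c' g) * g i) + (\<Sum>h\<in>G-{g}. (\<lambda>i. int (c' h) * h i))"
      using G(1) g(1) by (rule sum.remove)
    have s3: "(\<Sum>h\<in>G-{g}. (\<lambda>i. int (c' h) * h i)) = (\<Sum>h\<in>G-{g}. (\<lambda>i. int (c h) * h i))"
      by (rule sum.cong) (auto simp: c'_def)
    have s4: "(\<lambda>i. int (c g) * g i) = g + (\<lambda>i. int (c' g) * g i)"
      using g(2) by (auto simp: c'_def fun_eq_iff algebra_simps of_nat_diff)
    have dec: "a = g + ?r"
      unfolding c s1 s2 s3 s4 by (simp only: add.assoc)
    have rS: "?r \<in> S" by (subst G(3)) (rule rangeI)
    have gS: "g \<in> S" using G(2) g(1) by (rule subsetD)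
    have "\<forall>x\<in>S. \<forall>y\<in>S. a = x + y \<longrightarrow> x \<in> units_of_mon S \<or> y \<in> units_of_mon S"
      using a unfolding atoms_def mem_Collect_eq by (elim conjE)
    then have "g \<in> units_of_mon S \<or> ?r \<in> units_of_mon S"
      using dec rS gS by simp
    then have "?r = 0" using units g(3) by simp
    then show "a \<in> G" using dec g(1) by simp
  qed
  then show ?thesis using G(1) finite_subset by blast
qed


definition Tst :: "nat \<Rightarrow> (('n \<Rightarrow> int) \<Rightarrow>\<^sub>0 nat) \<Rightarrow> (('n \<Rightarrow> int) \<Rightarrow>\<^sub>0 nat) \<Rightarrow> bool" where
  "Tst d \<beta> \<beta>' \<longleftrightarrow> is_fact S \<beta> \<and> is_fact S \<beta>' \<and> atom_pow \<beta> = atom_pow \<beta>' \<and> d_gr deg \<beta> \<beta>' \<le> d"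

lemma Tst_sym: "Tst d \<beta> \<beta>' \<Longrightarrow> Tst d \<beta>' \<beta>"
  unfolding Tst_def d_gr_def by (simp add: max.commute)

lemma chain_of_rtrancl:
  assumes "(Tst d)\<^sup>*\<^sup>* \<alpha> \<gamma>" "is_fact S \<alpha>"
  shows "\<exists>cs. cs \<noteq> [] \<and> hd cs = \<alpha> \<and> last cs = \<gamma> \<and> (\<forall>\<beta>\<in>set cs. is_fact S \<beta>) \<and>
           (\<forall>j. Suc j < length cs \<longrightarrow>
              atom_pow (cs ! j) = atom_pow (cs ! Suc j) \<and> d_gr deg (cs ! j) (cs ! Suc j) \<le> d)"
  using assms
proof (induction rule: converse_rtranclp_induct)
  case base
  then show ?case by (intro exI[of _ "[\<gamma>]"]) auto
next
  case (step y z)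
  have fz: "is_fact S z" using step.hyps(1) unfolding Tst_def by blast
  obtain cs where cs: "cs \<noteq> []" "hd cs = z" "last cs = \<gamma>" "\<forall>\<beta>\<in>set cs. is_fact S \<beta>"
     "\<forall>j. Suc j < length cs \<longrightarrow> atom_pow (cs ! j) = atom_pow (cs ! Suc j) \<and> d_gr deg (cs ! j) (cs ! Suc j) \<le> d"
    using step.IH[OF fz] by (elim exE conjE)
  show ?case
  proof (intro exI[of _ "y # cs"] conjI allI impI)
    show "y # cs \<noteq> []" by simp
    show "hd (y # cs) = y" by simp
    show "last (y # cs) = \<gamma>" using cs by simp
    show "\<forall>\<beta>\<in>set (y # cs). is_fact S \<beta>" using cs step.prems by simp
    fix j assume j: "Suc j < length (y # cs)"
    have "atom_pow ((y # cs) ! j) = atom_pow ((y # cs) ! Suc j) \<and> d_gr deg ((y # cs) ! j) ((y # cs) ! Suc j) \<le> d"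
    proof (cases j)
      case 0
      have "cs ! 0 = z" using cs(1,2) by (simp add: hd_conv_nth)
      then show ?thesis using 0 step.hyps(1) unfolding Tst_def by simp
    next
      case (Suc j')
      then show ?thesis using cs(5) j by simp
    qed
    then show "atom_pow ((y # cs) ! j) = atom_pow ((y # cs) ! Suc j)"
      "d_gr deg ((y # cs) ! j) ((y # cs) ! Suc j) \<le> d" by auto
  qed
qed

lemma rtrancl_of_chain:
  assumes "cs \<noteq> []" "\<forall>\<beta>\<in>set cs. is_fact S \<beta>"
    "\<forall>j. Suc j < length cs \<longrightarrow> atom_pow (cs ! j) = atom_pow (cs ! Suc j) \<and> d_gr deg (cs ! j) (cs ! Suc j) \<le> d"
  shows "(Tst d)\<^sup>*\<^sup>* (hd cs) (last cs)"
  using assms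
proof (induction cs)
  case Nil
  then show ?case by simp
next
  case (Cons x cs)
  show ?case
  proof (cases "cs = []")
    case True
    then show ?thesis by simp
  next
    case False
    have st: "\<forall>j. Suc j < length cs \<longrightarrow> atom_pow (cs ! j) = atom_pow (cs ! Suc j) \<and> d_gr deg (cs ! j) (cs ! Suc j) \<le> d"
    proof (intro allI impI)
      fix j assume "Suc j < length cs"
      then show "atom_pow (cs ! j) = atom_pow (cs ! Suc j) \<and> d_gr deg (cs ! j) (cs ! Suc j) \<le> d"
        using Cons.prems(3)[rule_format, of "Suc j"] by simp
    qed
    have ih: "(Tst d)\<^sup>*\<^sup>* (hd cs) (last cs)" using Cons.IH[OF False _ st] Cons.prems(2) by simp
    have f1: "is_fact S x" "is_fact S (hd cs)" using Cons.prems(2) hd_in_set[OF False] by auto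
    have "Tst d x (hd cs)"
      using Cons.prems(3)[rule_format, of 0] False f1 unfolding Tst_def
      by (simp add: hd_conv_nth)
    then show ?thesis using ih False by simp
  qed
qed

lemma cgr_bound_of:
  assumes "\<And>\<alpha> \<gamma>. is_fact S \<alpha> \<Longrightarrow> is_fact S \<gamma> \<Longrightarrow> atom_pow \<alpha> = atom_pow \<gamma> \<Longrightarrow> (Tst d)\<^sup>*\<^sup>* \<alpha> \<gamma>"
  shows "cgr_bound S deg d"
  unfolding cgr_bound_def using assms chain_of_rtrancl by blast

lemma cgr_bound_D:
  assumes "cgr_bound S deg d" "is_fact S \<alpha>" "is_fact S \<gamma>" "atom_pow \<alpha> = atom_pow \<gamma>"
  shows "(Tst d)\<^sup>*\<^sup>* \<alpha> \<gamma>"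
proof -
  obtain cs where "cs \<noteq> []" "hd cs = \<alpha>" "last cs = \<gamma>" "\<forall>\<beta>\<in>set cs. is_fact S \<beta>"
     "\<forall>j. Suc j < length cs \<longrightarrow> atom_pow (cs ! j) = atom_pow (cs ! Suc j) \<and> d_gr deg (cs ! j) (cs ! Suc j) \<le> d"
    using assms unfolding cgr_bound_def by blast
  then show ?thesis using rtrancl_of_chain by metis
qed

lemma nat_diff_min_add: "((x::nat) + z) - min (x + z) (y + z) = x - min x y"
  by (cases "x \<le> y") (auto simp: min_def)

lemma lk_diff_add: "lk (\<beta> + \<delta>) a - min (lk (\<beta> + \<delta>) a) (lk (\<beta>' + \<delta>) a) = lk \<beta> a - min (lk \<beta> a) (lk \<beta>' a)"
  for \<beta> \<beta>' \<delta> :: "'a \<Rightarrow>\<^sub>0 nat"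
  unfolding lookup_add by (rule nat_diff_min_add)

lemma gr_len_diff_shift: "gr_len_diff deg (\<beta> + \<delta>) (\<beta>' + \<delta>) = gr_len_diff deg \<beta> \<beta>'"
proof -
  let ?K = "ks \<beta> \<union> ks \<delta>"
  have "gr_len_diff deg (\<beta> + \<delta>) (\<beta>' + \<delta>) = (\<Sum>a\<in>?K. (lk (\<beta> + \<delta>) a - min (lk (\<beta> + \<delta>) a) (lk (\<beta>' + \<delta>) a)) * deg a)"
    by (rule gr_len_diff_sum) (simp_all add: keys_add)
  also have "\<dots> = (\<Sum>a\<in>?K. (lk \<beta> a - min (lk \<beta> a) (lk \<beta>' a)) * deg a)"
    by (simp only: lk_diff_add)
  also have "\<dots> = gr_len_diff deg \<beta> \<beta>'"
    by (rule gr_len_diff_sum[symmetric]) auto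
  finally show ?thesis .
qed

lemma Tst_shift: "Tst d \<beta> \<beta>' \<Longrightarrow> is_fact S \<delta> \<Longrightarrow> Tst d (\<beta> + \<delta>) (\<beta>' + \<delta>)"
  unfolding Tst_def d_gr_def by (simp add: is_fact_add atom_pow_add gr_len_diff_shift)

lemma rtrancl_shift: "(Tst d)\<^sup>*\<^sup>* \<beta> \<beta>' \<Longrightarrow> is_fact S \<delta> \<Longrightarrow> (Tst d)\<^sup>*\<^sup>* (\<beta> + \<delta>) (\<beta>' + \<delta>)"
proof (induction rule: rtranclp_induct)
  case base
  then show ?case by simp
next
  case (step y z)
  then show ?case using Tst_shift by (meson rtranclp.rtrancl_into_rtrancl)
qed

lemma nat_aux1: "((x::nat) - min x (x - y + z)) * k \<le> y * k"
  by (rule mult_right_mono) (auto simp: min_def)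

lemma nat_aux2: "(((x::nat) - y + z) - min (x - y + z) x) * k \<le> z * k"
  by (rule mult_right_mono) (auto simp: min_def)

lemma sub_add_back:
  fixes \<alpha> \<alpha>0 :: "('n \<Rightarrow> int) \<Rightarrow>\<^sub>0 nat"
  assumes "\<forall>a. lk \<alpha>0 a \<le> lk \<alpha> a"
  shows "(\<alpha> - \<alpha>0) + \<alpha>0 = \<alpha>"
  by (rule poly_mapping_eqI) (use assms in \<open>simp add: lookup_add lookup_minus_nat\<close>)

definition enc :: "(('n \<Rightarrow> int) \<Rightarrow>\<^sub>0 nat) \<times> (('n \<Rightarrow> int) \<Rightarrow>\<^sub>0 nat) \<Rightarrow> (('n \<Rightarrow> int) + ('n \<Rightarrow> int)) \<Rightarrow> nat" where
  "enc p = (\<lambda>x. case x of Inl a \<Rightarrow> lk (fst p) a | Inr a \<Rightarrow> lk (snd p) a)"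

lemma enc_le: "enc p \<le> enc q \<Longrightarrow> lk (fst p) a \<le> lk (fst q) a \<and> lk (snd p) a \<le> lk (snd q) a"
  unfolding le_fun_def enc_def by (metis sum.simps(5) sum.simps(6))

lemma basis_exists:
  "\<exists>M. finite M \<and> M \<subseteq> {(\<alpha>, \<gamma>). is_fact S \<alpha> \<and> is_fact S \<gamma> \<and> atom_pow \<alpha> = atom_pow \<gamma> \<and> \<alpha> \<noteq> \<gamma>} \<and>
     (\<forall>p\<in>{(\<alpha>, \<gamma>). is_fact S \<alpha> \<and> is_fact S \<gamma> \<and> atom_pow \<alpha> = atom_pow \<gamma> \<and> \<alpha> \<noteq> \<gamma>}. \<exists>m\<in>M. enc m \<le> enc p)"
proof -
  let ?P = "{(\<alpha>, \<gamma>). is_fact S \<alpha> \<and> is_fact S \<gamma> \<and> atom_pow \<alpha> = atom_pow \<gamma> \<and> \<alpha> \<noteq> \<gamma>}"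
  let ?I = "Inl ` atoms S \<union> Inr ` atoms S"
  have fI: "finite ?I" using atoms_finite by simp
  have sub: "enc ` ?P \<subseteq> supp_in ?I"
  proof
    fix u assume "u \<in> enc ` ?P"
    then obtain \<alpha> \<gamma> where p: "(\<alpha>, \<gamma>) \<in> ?P" "u = enc (\<alpha>, \<gamma>)" by blast
    have fa: "ks \<alpha> \<subseteq> atoms S" and fg: "ks \<gamma> \<subseteq> atoms S" using p(1) unfolding is_fact_def by auto
    show "u \<in> supp_in ?I"
      unfolding supp_in_def
    proof (intro CollectI allI impI)
      fix x assume x: "x \<notin> ?I"
      show "u x = 0"
      proof (cases x)
        case (Inl a)
        then have "a \<notin> ks \<alpha>" using x fa by blast
        then show ?thesis using Inl p(2) by (simp add: enc_def in_keys_iff)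
      next
        case (Inr a)
        then have "a \<notin> ks \<gamma>" using x fg by blast
        then show ?thesis using Inr p(2) by (simp add: enc_def in_keys_iff)
      qed
    qed
  qed
  obtain B where B: "finite B" "B \<subseteq> enc ` ?P" "\<forall>u\<in>enc ` ?P. \<exists>b\<in>B. b \<le> u"
    using dickson[OF fI sub] by (elim exE conjE)
  obtain C where C: "C \<subseteq> ?P" "finite C" "B = enc ` C"
    using finite_subset_image[OF B(1) B(2)] by (elim exE conjE)
  show ?thesis
  proof (intro exI conjI)
    show "finite C" "C \<subseteq> ?P" using C by auto
    show "\<forall>p\<in>?P. \<exists>m\<in>C. enc m \<le> enc p"
    proof
      fix p assume "p \<in> ?P"
      then have "enc p \<in> enc ` ?P" by blast
      then obtain b where "b \<in> B" "b \<le> enc p" using B(3) by blast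
      then show "\<exists>m\<in>C. enc m \<le> enc p" using C(3) by blast
    qed
  qed
qed

lemma exists_bound: "\<exists>d. cgr_bound S deg d"
proof -
  let ?P = "{(\<alpha>, \<gamma>). is_fact S \<alpha> \<and> is_fact S \<gamma> \<and> atom_pow \<alpha> = atom_pow \<gamma> \<and> \<alpha> \<noteq> \<gamma>}"
  obtain M where M: "finite M" "M \<subseteq> ?P" "\<forall>p\<in>?P. \<exists>m\<in>M. enc m \<le> enc p"
    using basis_exists by (elim exE conjE)
  define D where "D = (\<Sum>m\<in>M. gr_len deg (fst m) + gr_len deg (snd m))"
  have DM: "gr_len deg (fst m) \<le> D" "gr_len deg (snd m) \<le> D" if "m \<in> M" for m
  proof -
    have "gr_len deg (fst m) + gr_len deg (snd m) \<le> D"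
      unfolding D_def using M(1) that by (intro member_le_sum) auto
    then show "gr_len deg (fst m) \<le> D" "gr_len deg (snd m) \<le> D" by auto
  qed
  have main: "\<forall>\<alpha> \<gamma>. gr_len deg \<alpha> = n \<longrightarrow> is_fact S \<alpha> \<longrightarrow> is_fact S \<gamma> \<longrightarrow> atom_pow \<alpha> = atom_pow \<gamma> \<longrightarrow> (Tst D)\<^sup>*\<^sup>* \<alpha> \<gamma>" for n
  proof (induction n rule: less_induct)
    case (less n)
    show ?case
    proof (intro allI impI)
      fix \<alpha> \<gamma> :: "('n \<Rightarrow> int) \<Rightarrow>\<^sub>0 nat"
      assume n: "gr_len deg \<alpha> = n" and fa: "is_fact S \<alpha>" and fg: "is_fact S \<gamma>" and eq: "atom_pow \<alpha> = atom_pow \<gamma>"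
      show "(Tst D)\<^sup>*\<^sup>* \<alpha> \<gamma>"
      proof (cases "\<alpha> = \<gamma>")
        case True then show ?thesis by simp
      next
        case False
        then have "(\<alpha>, \<gamma>) \<in> ?P" using fa fg eq by simp
        then obtain m where m: "m \<in> M" "enc m \<le> enc (\<alpha>, \<gamma>)" using M(3) by blast
        obtain \<alpha>0 \<gamma>0 where m0: "m = (\<alpha>0, \<gamma>0)" by (cases m)
        have mP: "(\<alpha>0, \<gamma>0) \<in> ?P" using m(1) M(2) m0 by blast
        then have fa0: "is_fact S \<alpha>0" and fg0: "is_fact S \<gamma>0" and eq0: "atom_pow \<alpha>0 = atom_pow \<gamma>0"
          and ne0: "\<alpha>0 \<noteq> \<gamma>0" by auto
        have lea: "\<forall>a. lk \<alpha>0 a \<le> lk \<alpha> a" and leg: "\<forall>a. lk \<gamma>0 a \<le> lk \<gamma> a"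
          using enc_le[OF m(2)] m0 by auto
        have Da: "gr_len deg \<alpha>0 \<le> D" and Dg: "gr_len deg \<gamma>0 \<le> D" using DM[OF m(1)] m0 by auto
        have a0nz: "\<alpha>0 \<noteq> 0"
        proof
          assume z: "\<alpha>0 = 0"
          then have "atom_pow \<gamma>0 = 0" using eq0 by simp
          then have "gr_len deg \<gamma>0 = 0" using fact_in(2)[OF fg0] deg0 by simp
          then have "\<gamma>0 = 0" using gr_len_pos[OF fg0] by (cases "\<gamma>0 = 0") auto
          then show False using z ne0 by simp
        qed
        define \<alpha>' where "\<alpha>' = (\<alpha> - \<alpha>0) + \<gamma>0"
        have fr: "is_fact S (\<alpha> - \<alpha>0)" using fa by (rule is_fact_minus)
        have gr: "is_fact S (\<gamma> - \<gamma>0)" using fg by (rule is_fact_minus)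
        have fa': "is_fact S \<alpha>'" unfolding \<alpha>'_def using fr fg0 by (rule is_fact_add)
        have ra: "(\<alpha> - \<alpha>0) + \<alpha>0 = \<alpha>" using lea by (rule sub_add_back)
        have rg: "(\<gamma> - \<gamma>0) + \<gamma>0 = \<gamma>" using leg by (rule sub_add_back)
        have pa: "atom_pow \<alpha> = atom_pow (\<alpha> - \<alpha>0) + atom_pow \<alpha>0"
          using ra atom_pow_add by metis
        have pg: "atom_pow \<gamma> = atom_pow (\<gamma> - \<gamma>0) + atom_pow \<gamma>0"
          using rg atom_pow_add by metis
        have pa': "atom_pow \<alpha>' = atom_pow \<alpha>"
          unfolding \<alpha>'_def atom_pow_add pa eq0 ..
        have step1: "Tst D \<alpha> \<alpha>'"
        proof -
          let ?K = "ks \<alpha> \<union> ks \<alpha>0"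
          have "gr_len_diff deg \<alpha> \<alpha>' = (\<Sum>a\<in>?K. (lk \<alpha> a - min (lk \<alpha> a) (lk \<alpha>' a)) * deg a)"
            by (rule gr_len_diff_sum) auto
          also have "\<dots> \<le> (\<Sum>a\<in>?K. lk \<alpha>0 a * deg a)"
            by (rule sum_mono) (simp only: \<alpha>'_def lookup_add lookup_minus_nat nat_aux1)
          also have "\<dots> = gr_len deg \<alpha>0"
            by (rule gr_len_sum[symmetric]) auto
          finally have d1: "gr_len_diff deg \<alpha> \<alpha>' \<le> D" using Da by linarith
          let ?K2 = "ks \<alpha>' \<union> ks \<gamma>0"
          have "gr_len_diff deg \<alpha>' \<alpha> = (\<Sum>a\<in>?K2. (lk \<alpha>' a - min (lk \<alpha>' a) (lk \<alpha> a)) * deg a)"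
            by (rule gr_len_diff_sum) auto
          also have "\<dots> \<le> (\<Sum>a\<in>?K2. lk \<gamma>0 a * deg a)"
            by (rule sum_mono) (simp only: \<alpha>'_def lookup_add lookup_minus_nat nat_aux2)
          also have "\<dots> = gr_len deg \<gamma>0"
            by (rule gr_len_sum[symmetric]) auto
          finally have d2: "gr_len_diff deg \<alpha>' \<alpha> \<le> D" using Dg by linarith
          show ?thesis unfolding Tst_def d_gr_def using fa fa' pa' d1 d2 by simp
        qed
        have eqr: "atom_pow (\<alpha> - \<alpha>0) = atom_pow (\<gamma> - \<gamma>0)"
        proof -
          have "atom_pow (\<alpha> - \<alpha>0) + atom_pow \<gamma>0 = atom_pow (\<gamma> - \<gamma>0) + atom_pow \<gamma>0"
            using pa' unfolding \<alpha>'_def atom_pow_add using eq pg by simp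
          then show ?thesis by simp
        qed
        have lt: "gr_len deg (\<alpha> - \<alpha>0) < n"
        proof -
          have "gr_len deg \<alpha> = gr_len deg (\<alpha> - \<alpha>0) + gr_len deg \<alpha>0"
            using ra gr_len_add by metis
          moreover have "gr_len deg \<alpha>0 > 0" using gr_len_pos[OF fa0 a0nz] .
          ultimately show ?thesis using n by linarith
        qed
        have "(Tst D)\<^sup>*\<^sup>* (\<alpha> - \<alpha>0) (\<gamma> - \<gamma>0)"
          using less.IH[OF lt] fr gr eqr by blast
        then have "(Tst D)\<^sup>*\<^sup>* \<alpha>' \<gamma>"
          using rtrancl_shift[OF _ fg0] rg unfolding \<alpha>'_def by metis
        then show ?thesis using step1 by (meson converse_rtranclp_into_rtranclp)
      qed
    qed
  qed
  have "cgr_bound S deg D"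
    by (rule cgr_bound_of) (use main in blast)
  then show ?thesis by blast
qed

lemma poly_expand: "p = (\<Sum>\<alpha>\<in>ks p. Poly_Mapping.single \<alpha> (lk p \<alpha>))"
  for p :: "('a \<Rightarrow>\<^sub>0 'b::comm_monoid_add)"
proof (rule poly_mapping_eqI)
  fix k
  have "lk (\<Sum>\<alpha>\<in>ks p. Poly_Mapping.single \<alpha> (lk p \<alpha>)) k = (\<Sum>\<alpha>\<in>ks p. if \<alpha> = k then lk p \<alpha> else 0)"
    by (simp add: lookup_sum lookup_single when_def)
  also have "\<dots> = lk p k" by (simp add: in_keys_iff)
  finally show "lk p k = lk (\<Sum>\<alpha>\<in>ks p. Poly_Mapping.single \<alpha> (lk p \<alpha>)) k" by simp
qed

lemma single_sum: "Poly_Mapping.single k (sum f A) = (\<Sum>x\<in>A. Poly_Mapping.single k (f x))"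
  for f :: "'c \<Rightarrow> 'b::comm_monoid_add"
  by (rule poly_mapping_eqI) (simp add: lookup_sum lookup_single when_def)

lemma pi_R_sum:
  assumes "finite K" "ks p \<subseteq> K"
  shows "pi_R p = (\<Sum>\<alpha>\<in>K. Poly_Mapping.single (atom_pow \<alpha>) (lk p \<alpha>))"
  unfolding pi_R_def
  by (rule sum.mono_neutral_left) (use assms in \<open>auto simp: in_keys_iff\<close>)

lemma pi_R_add: "pi_R (p + q) = pi_R p + pi_R q"
proof -
  let ?K = "ks p \<union> ks q"
  have "pi_R (p + q) = (\<Sum>\<alpha>\<in>?K. Poly_Mapping.single (atom_pow \<alpha>) (lk (p + q) \<alpha>))"
    by (rule pi_R_sum) (simp_all add: keys_add)
  also have "\<dots> = (\<Sum>\<alpha>\<in>?K. Poly_Mapping.single (atom_pow \<alpha>) (lk p \<alpha>) + Poly_Mapping.single (atom_pow \<alpha>) (lk q \<alpha>))"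
    by (simp only: lookup_add single_add)
  also have "\<dots> = pi_R p + pi_R q"
  proof -
    have a: "pi_R p = (\<Sum>\<alpha>\<in>?K. Poly_Mapping.single (atom_pow \<alpha>) (lk p \<alpha>))" by (rule pi_R_sum) auto
    have b: "pi_R q = (\<Sum>\<alpha>\<in>?K. Poly_Mapping.single (atom_pow \<alpha>) (lk q \<alpha>))" by (rule pi_R_sum) auto
    show ?thesis by (simp only: a b sum.distrib)
  qed
  finally show ?thesis .
qed

lemma pi_R_0[simp]: "pi_R 0 = 0"
  by (simp add: pi_R_def)

lemma pi_R_sumf: "pi_R (sum f A) = (\<Sum>x\<in>A. pi_R (f x))"
proof (induction A rule: infinite_finite_induct)
  case (infinite A) then show ?case by simp
next
  case empty then show ?case by simp
next
  case (insert x F) then show ?case by (simp add: pi_R_add)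
qed

lemma pi_R_single: "pi_R (Poly_Mapping.single \<alpha> c) = Poly_Mapping.single (atom_pow \<alpha>) c"
  by (subst pi_R_sum[of "{\<alpha>}"]) auto

lemma pi_R_mult: "pi_R (p * q) = pi_R p * pi_R q"
  for p q :: "('n, 'r::comm_ring_1) mpoly"
proof -
  have "p * q = (\<Sum>\<alpha>\<in>ks p. Poly_Mapping.single \<alpha> (lk p \<alpha>)) * (\<Sum>\<beta>\<in>ks q. Poly_Mapping.single \<beta> (lk q \<beta>))"
    using poly_expand[of p] poly_expand[of q] by simp
  also have "\<dots> = (\<Sum>\<alpha>\<in>ks p. \<Sum>\<beta>\<in>ks q. Poly_Mapping.single (\<alpha> + \<beta>) (lk p \<alpha> * lk q \<beta>))"
    by (simp only: sum_distrib_right) (simp only: sum_distrib_left mult_single)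
  finally have e: "p * q = \<dots>" .
  have "pi_R (p * q) = (\<Sum>\<alpha>\<in>ks p. \<Sum>\<beta>\<in>ks q. Poly_Mapping.single (atom_pow \<alpha> + atom_pow \<beta>) (lk p \<alpha> * lk q \<beta>))"
    unfolding e by (simp add: pi_R_sumf pi_R_single atom_pow_add)
  also have "\<dots> = (\<Sum>\<alpha>\<in>ks p. Poly_Mapping.single (atom_pow \<alpha>) (lk p \<alpha>)) * (\<Sum>\<beta>\<in>ks q. Poly_Mapping.single (atom_pow \<beta>) (lk q \<beta>))"
    by (simp only: sum_distrib_right) (simp only: sum_distrib_left mult_single)
  also have "\<dots> = pi_R p * pi_R q" unfolding pi_R_def ..
  finally show ?thesis .
qed

lemma lookup_pi_R: "lk (pi_R p) s = (\<Sum>\<alpha>\<in>{\<alpha>\<in>ks p. atom_pow \<alpha> = s}. lk p \<alpha>)"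
  unfolding pi_R_def by (simp add: lookup_sum lookup_single when_def sum.inter_filter eq_commute)

lemma poly_ring_add: "p \<in> poly_ring S \<Longrightarrow> q \<in> poly_ring S \<Longrightarrow> p + q \<in> poly_ring S"
  unfolding poly_ring_def using keys_add[of p q] by blast

lemma poly_ring_0: "0 \<in> poly_ring S"
  unfolding poly_ring_def by simp

lemma poly_ring_single: "is_fact S \<alpha> \<Longrightarrow> Poly_Mapping.single \<alpha> c \<in> poly_ring S"
  unfolding poly_ring_def by simp

lemma poly_ring_mult: "p \<in> poly_ring S \<Longrightarrow> q \<in> poly_ring S \<Longrightarrow> p * q \<in> poly_ring S"
  for p q :: "('n, 'r::comm_ring_1) mpoly"
  unfolding poly_ring_def using keys_mult[of p q] is_fact_add by blast

lemma poly_ring_diff: "p \<in> poly_ring S \<Longrightarrow> q \<in> poly_ring S \<Longrightarrow> p - q \<in> poly_ring S"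
  for p q :: "('n, 'r::comm_ring_1) mpoly"
  unfolding poly_ring_def using keys_diff[of p q] by blast

lemma poly_ring_sum: "(\<And>x. x \<in> A \<Longrightarrow> f x \<in> poly_ring S) \<Longrightarrow> sum f A \<in> poly_ring S"
  by (induction A rule: infinite_finite_induct) (auto simp: poly_ring_0 poly_ring_add)

lemma pi_R_diff: "pi_R (p - q) = pi_R p - pi_R q"
  for p q :: "('n, 'r::comm_ring_1) mpoly"
proof -
  have "pi_R p = pi_R (p - q) + pi_R q" using pi_R_add[of "p - q" q] by simp
  then show ?thesis by simp
qed

lemma ig_iff: "x \<in> ideal_gen S G \<longleftrightarrow> (\<exists>H c. x = (\<Sum>g\<in>H. c g * g) \<and> finite H \<and> H \<subseteq> G \<and> (\<forall>g\<in>H. c g \<in> poly_ring S))"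
  unfolding ideal_gen_def by blast

lemma ig_0: "0 \<in> ideal_gen S G"
  unfolding ig_iff by (rule exI[of _ "{}"]) simp

lemma ig_gen: "g \<in> G \<Longrightarrow> r \<in> poly_ring S \<Longrightarrow> r * g \<in> ideal_gen S G"
  unfolding ig_iff by (rule exI[of _ "{g}"], rule exI[of _ "\<lambda>_. r"]) simp

lemma ig_add:
  assumes "x \<in> ideal_gen S G" "y \<in> ideal_gen S G"
  shows "x + y \<in> ideal_gen S G"
proof -
  obtain H1 c1 where 1: "x = (\<Sum>g\<in>H1. c1 g * g)" "finite H1" "H1 \<subseteq> G" "\<forall>g\<in>H1. c1 g \<in> poly_ring S"
    using assms(1) unfolding ig_iff by blast
  obtain H2 c2 where 2: "y = (\<Sum>g\<in>H2. c2 g * g)" "finite H2" "H2 \<subseteq> G" "\<forall>g\<in>H2. c2 g \<in> poly_ring S"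
    using assms(2) unfolding ig_iff by blast
  define c where "c g = (if g \<in> H1 then c1 g else 0) + (if g \<in> H2 then c2 g else 0)" for g
  let ?H = "H1 \<union> H2"
  have fH: "finite ?H" using 1(2) 2(2) by simp
  have "(\<Sum>g\<in>?H. c g * g) = (\<Sum>g\<in>?H. (if g \<in> H1 then c1 g * g else 0) + (if g \<in> H2 then c2 g * g else 0))"
    by (rule sum.cong) (auto simp: c_def distrib_right)
  also have "\<dots> = (\<Sum>g\<in>?H. if g \<in> H1 then c1 g * g else 0) + (\<Sum>g\<in>?H. if g \<in> H2 then c2 g * g else 0)"
    by (rule sum.distrib)
  also have "\<dots> = (\<Sum>g\<in>?H \<inter> H1. c1 g * g) + (\<Sum>g\<in>?H \<inter> H2. c2 g * g)"
    by (simp only: sum.inter_restrict[OF fH])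
  also have "\<dots> = x + y" using 1(1) 2(1) by (simp add: Int_absorb1)
  finally have e: "x + y = (\<Sum>g\<in>?H. c g * g)" by simp
  have "\<forall>g\<in>?H. c g \<in> poly_ring S"
    using 1(4) 2(4) by (auto simp: c_def intro!: poly_ring_add poly_ring_0)
  then show ?thesis unfolding ig_iff using e fH 1(3) 2(3) by blast
qed

lemma ig_mult:
  fixes r x :: "('n, 'r::comm_ring_1) mpoly"
  assumes "r \<in> poly_ring S" "x \<in> ideal_gen S G"
  shows "r * x \<in> ideal_gen S G"
proof -
  obtain H c where 1: "x = (\<Sum>g\<in>H. c g * g)" "finite H" "H \<subseteq> G" "\<forall>g\<in>H. c g \<in> poly_ring S"
    using assms(2) unfolding ig_iff by blast
  have "r * x = (\<Sum>g\<in>H. (r * c g) * g)" unfolding 1(1) by (simp add: sum_distrib_left mult.assoc)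
  moreover have "\<forall>g\<in>H. r * c g \<in> poly_ring S" using 1(4) assms(1) poly_ring_mult by blast
  ultimately show ?thesis unfolding ig_iff using 1(2,3)
    by (intro exI[of _ H] exI[of _ "\<lambda>g. r * c g"]) simp
qed

lemma ig_sum: "(\<And>x. x \<in> A \<Longrightarrow> f x \<in> ideal_gen S G) \<Longrightarrow> sum f A \<in> ideal_gen S G"
  by (induction A rule: infinite_finite_induct) (auto simp: ig_0 ig_add)

definition Gd :: "nat \<Rightarrow> ('n, 'r::comm_ring_1) mpoly set" where
  "Gd d = {p \<in> ker_pi S. \<exists>e\<le>d. homogeneous deg e p}"

lemma binom_in:
  assumes T: "Tst d \<beta> \<beta>'"
  shows "Poly_Mapping.single \<beta> (1::'r::comm_ring_1) - Poly_Mapping.single \<beta>' 1 \<in> ideal_gen S (Gd d)"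
proof -
  have fb: "is_fact S \<beta>" and fb': "is_fact S \<beta>'" and eq: "atom_pow \<beta> = atom_pow \<beta>'"
    and dd: "d_gr deg \<beta> \<beta>' \<le> d" using T unfolding Tst_def by auto
  define u where "u = \<beta> - \<beta>'"
  define v where "v = \<beta>' - \<beta>"
  define g where "g = \<beta> - u"
  have hb: "g + u = \<beta>"
    by (rule poly_mapping_eqI) (simp add: g_def u_def lookup_add lookup_minus_nat)
  have hb': "g + v = \<beta>'"
    by (rule poly_mapping_eqI) (simp add: g_def u_def v_def lookup_add lookup_minus_nat)
  have fu: "is_fact S u" unfolding u_def using fb by (rule is_fact_minus)
  have fv: "is_fact S v" unfolding v_def using fb' by (rule is_fact_minus)
  have fg: "is_fact S g" unfolding g_def using fb by (rule is_fact_minus)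
  have puv: "atom_pow u = atom_pow v"
  proof -
    have "atom_pow g + atom_pow u = atom_pow g + atom_pow v"
      using eq hb hb' atom_pow_add by metis
    then show ?thesis by simp
  qed
  have guv: "gr_len deg u = gr_len deg v" using fact_in(2)[OF fu] fact_in(2)[OF fv] puv by simp
  have gud: "gr_len deg u \<le> d"
  proof -
    have ku: "ks u \<subseteq> ks \<beta>" unfolding u_def by (auto simp: in_keys_iff lookup_minus_nat)
    have "gr_len deg u = (\<Sum>a\<in>ks \<beta>. lk u a * deg a)" by (rule gr_len_sum) (use ku in auto)
    also have "\<dots> = (\<Sum>a\<in>ks \<beta>. (lk \<beta> a - min (lk \<beta> a) (lk \<beta>' a)) * deg a)"
      by (rule sum.cong) (auto simp: u_def lookup_minus_nat min_def)
    also have "\<dots> = gr_len_diff deg \<beta> \<beta>'" by (rule gr_len_diff_sum[symmetric]) auto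
    finally show ?thesis using dd unfolding d_gr_def by linarith
  qed
  define bn where "bn = Poly_Mapping.single u (1::'r) - Poly_Mapping.single v 1"
  have bnR: "bn \<in> poly_ring S" unfolding bn_def
    by (intro poly_ring_diff poly_ring_single fu fv)
  have bnK: "pi_R bn = 0" unfolding bn_def by (simp add: pi_R_diff pi_R_single puv)
  have bnH: "homogeneous deg (gr_len deg u) bn"
    unfolding homogeneous_def
  proof
    fix \<alpha> assume "\<alpha> \<in> ks bn"
    then have "\<alpha> = u \<or> \<alpha> = v" unfolding bn_def using keys_diff by fastforce
    then show "gr_len deg \<alpha> = gr_len deg u" using guv by auto
  qed
  have bnG: "bn \<in> Gd d" unfolding Gd_def ker_pi_def using bnR bnK bnH gud by blast
  have "Poly_Mapping.single \<beta> (1::'r) - Poly_Mapping.single \<beta>' 1 = Poly_Mapping.single g 1 * bn"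
    unfolding bn_def right_diff_distrib mult_single using hb hb' by simp
  moreover have "Poly_Mapping.single g (1::'r) \<in> poly_ring S" using fg by (rule poly_ring_single)
  ultimately show ?thesis using ig_gen[OF bnG] by simp
qed

lemma chain_in:
  assumes "(Tst d)\<^sup>*\<^sup>* \<beta> \<beta>'"
  shows "Poly_Mapping.single \<beta> (1::'r::comm_ring_1) - Poly_Mapping.single \<beta>' 1 \<in> ideal_gen S (Gd d)"
  using assms
proof (induction rule: rtranclp_induct)
  case base
  then show ?case using ig_0 by simp
next
  case (step y z)
  have "Poly_Mapping.single \<beta> (1::'r) - Poly_Mapping.single z 1 =
    (Poly_Mapping.single \<beta> 1 - Poly_Mapping.single y 1) + (Poly_Mapping.single y 1 - Poly_Mapping.single z 1)"
    by simp
  then show ?case using ig_add[OF step.IH binom_in[OF step.hyps(2)]] by simp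
qed

lemma ig_sub_ker:
  assumes "G \<subseteq> ker_pi S"
  shows "ideal_gen S G \<subseteq> (ker_pi S :: ('n, 'r::comm_ring_1) mpoly set)"
proof
  fix x :: "('n, 'r) mpoly" assume "x \<in> ideal_gen S G"
  then obtain H c where 1: "x = (\<Sum>g\<in>H. c g * g)" "finite H" "H \<subseteq> G" "\<forall>g\<in>H. c g \<in> poly_ring S"
    unfolding ig_iff by blast
  have gk: "g \<in> poly_ring S" "pi_R g = 0" if "g \<in> H" for g
    using that 1(3) assms unfolding ker_pi_def by auto
  have "x \<in> poly_ring S" unfolding 1(1)
    by (rule poly_ring_sum) (use 1(4) gk in \<open>auto intro: poly_ring_mult\<close>)
  moreover have "pi_R x = 0" unfolding 1(1) pi_R_sumf pi_R_mult using gk by simp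
  ultimately show "x \<in> ker_pi S" unfolding ker_pi_def by blast
qed

lemma ker_sub:
  assumes cb: "cgr_bound S deg d"
  shows "(ker_pi S :: ('n, 'r::comm_ring_1) mpoly set) \<subseteq> ideal_gen S (Gd d)"
proof
  fix p :: "('n, 'r) mpoly" assume pk: "p \<in> ker_pi S"
  then have pR: "p \<in> poly_ring S" and p0: "pi_R p = 0" unfolding ker_pi_def by auto
  define rep where "rep s = (SOME \<alpha>. \<alpha> \<in> ks p \<and> atom_pow \<alpha> = s)" for s
  have rep: "rep (atom_pow \<alpha>) \<in> ks p \<and> atom_pow (rep (atom_pow \<alpha>)) = atom_pow \<alpha>" if "\<alpha> \<in> ks p" for \<alpha>
    unfolding rep_def by (rule someI[of _ \<alpha>]) (use that in simp)
  have fk: "is_fact S \<alpha>" if "\<alpha> \<in> ks p" for \<alpha> using pR that unfolding poly_ring_def by blast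
  let ?t = "\<lambda>\<alpha>. Poly_Mapping.single 0 (lk p \<alpha>) * (Poly_Mapping.single \<alpha> 1 - Poly_Mapping.single (rep (atom_pow \<alpha>)) 1)"
  have tin: "?t \<alpha> \<in> ideal_gen S (Gd d)" if "\<alpha> \<in> ks p" for \<alpha>
  proof (rule ig_mult)
    show "Poly_Mapping.single 0 (lk p \<alpha>) \<in> poly_ring S" by (rule poly_ring_single) simp
    have "(Tst d)\<^sup>*\<^sup>* \<alpha> (rep (atom_pow \<alpha>))"
      using cgr_bound_D[OF cb fk[OF that] fk] rep[OF that] by metis
    then show "Poly_Mapping.single \<alpha> 1 - Poly_Mapping.single (rep (atom_pow \<alpha>)) 1 \<in> ideal_gen S (Gd d)"
      by (rule chain_in)
  qed
  have "(\<Sum>\<alpha>\<in>ks p. ?t \<alpha>) = (\<Sum>\<alpha>\<in>ks p. Poly_Mapping.single \<alpha> (lk p \<alpha>) - Poly_Mapping.single (rep (atom_pow \<alpha>)) (lk p \<alpha>))"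
    by (rule sum.cong) (simp_all add: right_diff_distrib mult_single)
  also have "\<dots> = p - (\<Sum>\<alpha>\<in>ks p. Poly_Mapping.single (rep (atom_pow \<alpha>)) (lk p \<alpha>))"
    using poly_expand[of p] by (simp add: sum_subtractf)
  also have "(\<Sum>\<alpha>\<in>ks p. Poly_Mapping.single (rep (atom_pow \<alpha>)) (lk p \<alpha>)) = 0"
  proof -
    have "(\<Sum>\<alpha>\<in>ks p. Poly_Mapping.single (rep (atom_pow \<alpha>)) (lk p \<alpha>)) =
       (\<Sum>s\<in>atom_pow ` ks p. \<Sum>\<alpha>\<in>{x. x \<in> ks p \<and> atom_pow x = s}. Poly_Mapping.single (rep (atom_pow \<alpha>)) (lk p \<alpha>))"
      by (rule sum.image_gen) simp
    also have "\<dots> = (\<Sum>s\<in>atom_pow ` ks p. \<Sum>\<alpha>\<in>{x. x \<in> ks p \<and> atom_pow x = s}. Poly_Mapping.single (rep s) (lk p \<alpha>))"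
      by (intro sum.cong refl) auto
    also have "\<dots> = (\<Sum>s\<in>atom_pow ` ks p. Poly_Mapping.single (rep s) (lk (pi_R p) s))"
      by (simp add: single_sum lookup_pi_R)
    also have "\<dots> = 0" using p0 by simp
    finally show ?thesis .
  qed
  finally have "(\<Sum>\<alpha>\<in>ks p. ?t \<alpha>) = p" by simp
  then show "p \<in> ideal_gen S (Gd d)" using ig_sum[of "ks p" ?t] tin by metis
qed

lemma P2:
  assumes "cgr_bound S deg d"
  shows "(ker_pi S :: ('n, 'r::comm_ring_1) mpoly set) = ideal_gen S (Gd d)"
proof
  show "(ker_pi S :: ('n, 'r) mpoly set) \<subseteq> ideal_gen S (Gd d)" using ker_sub[OF assms] .
  show "ideal_gen S (Gd d) \<subseteq> (ker_pi S :: ('n, 'r) mpoly set)"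
    by (rule ig_sub_ker) (auto simp: Gd_def)
qed

definition phi :: "(('n \<Rightarrow> int) \<Rightarrow>\<^sub>0 nat) set \<Rightarrow> ('n, 'r::comm_ring_1) mpoly \<Rightarrow> 'r" where
  "phi C q = (\<Sum>a\<in>{a\<in>ks q. a \<in> C}. lk q a)"

lemma phi_sum:
  assumes "finite K" "ks q \<subseteq> K"
  shows "phi C q = (\<Sum>a\<in>{a\<in>K. a \<in> C}. lk q a)"
  unfolding phi_def
  by (rule sum.mono_neutral_left) (use assms in \<open>auto simp: in_keys_iff\<close>)

lemma phi_add: "phi C (p + q) = phi C p + phi C q"
proof -
  let ?K = "ks p \<union> ks q"
  have "phi C (p + q) = (\<Sum>a\<in>{a\<in>?K. a \<in> C}. lk (p + q) a)"
    by (rule phi_sum) (simp_all add: keys_add)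
  also have "\<dots> = (\<Sum>a\<in>{a\<in>?K. a \<in> C}. lk p a) + (\<Sum>a\<in>{a\<in>?K. a \<in> C}. lk q a)"
    by (simp add: lookup_add sum.distrib)
  also have "\<dots> = phi C p + phi C q"
  proof -
    have a: "phi C p = (\<Sum>a\<in>{a\<in>?K. a \<in> C}. lk p a)" by (rule phi_sum) auto
    have b: "phi C q = (\<Sum>a\<in>{a\<in>?K. a \<in> C}. lk q a)" by (rule phi_sum) auto
    show ?thesis by (simp only: a b)
  qed
  finally show ?thesis .
qed

lemma phi_0[simp]: "phi C 0 = 0"
  by (simp add: phi_def)

lemma phi_diff: "phi C (p - q) = phi C p - phi C q"
proof -
  have "phi C p = phi C (p - q) + phi C q" using phi_add[of C "p - q" q] by simp
  then show ?thesis by simp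
qed

lemma phi_sumf: "phi C (sum f A) = (\<Sum>x\<in>A. phi C (f x))"
  by (induction A rule: infinite_finite_induct) (simp_all add: phi_add)

lemma phi_single: "phi C (Poly_Mapping.single a c) = (if a \<in> C then c else 0)"
proof -
  have e: "phi C (Poly_Mapping.single a c) = (\<Sum>x\<in>{x\<in>{a}. x \<in> C}. lk (Poly_Mapping.single a c) x)"
    by (rule phi_sum) auto
  show ?thesis
  proof (cases "a \<in> C")
    case True
    then have "{x\<in>{a}. x \<in> C} = {a}" by auto
    then show ?thesis using e True by simp
  next
    case False
    then have z: "{x\<in>{a}. x \<in> C} = {}" by auto
    show ?thesis unfolding e z using False by simp
  qed
qed

definition sat :: "nat \<Rightarrow> (('n \<Rightarrow> int) \<Rightarrow>\<^sub>0 nat) set \<Rightarrow> bool" where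
  "sat d C \<longleftrightarrow> (\<forall>x y. Tst d x y \<longrightarrow> (x \<in> C \<longleftrightarrow> y \<in> C))"

lemma single_mult_expand:
  "Poly_Mapping.single \<delta> c * q = (\<Sum>\<beta>\<in>ks q. Poly_Mapping.single (\<delta> + \<beta>) (c * lk q \<beta>))"
  for q :: "('n, 'r::comm_ring_1) mpoly"
proof -
  have "Poly_Mapping.single \<delta> c * q = Poly_Mapping.single \<delta> c * (\<Sum>\<beta>\<in>ks q. Poly_Mapping.single \<beta> (lk q \<beta>))"
    using poly_expand[of q] by simp
  also have "\<dots> = (\<Sum>\<beta>\<in>ks q. Poly_Mapping.single (\<delta> + \<beta>) (c * lk q \<beta>))"
    by (simp only: sum_distrib_left mult_single)
  finally show ?thesis .
qed

lemma phi_shift: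
  "phi C (Poly_Mapping.single \<delta> c * q) = c * phi {\<beta>. \<delta> + \<beta> \<in> C} q"
  for q :: "('n, 'r::comm_ring_1) mpoly"
proof -
  have "phi C (Poly_Mapping.single \<delta> c * q) = (\<Sum>\<beta>\<in>ks q. if \<delta> + \<beta> \<in> C then c * lk q \<beta> else 0)"
    unfolding single_mult_expand phi_sumf phi_single ..
  also have "\<dots> = c * (\<Sum>\<beta>\<in>ks q. if \<delta> + \<beta> \<in> C then lk q \<beta> else 0)"
    unfolding sum_distrib_left by (rule sum.cong) simp_all
  also have "\<dots> = c * phi {\<beta>. \<delta> + \<beta> \<in> C} q"
    unfolding phi_def by (simp add: sum.inter_filter)
  finally show ?thesis .
qed

lemma sat_shift: "is_fact S \<delta> \<Longrightarrow> sat d C \<Longrightarrow> sat d {\<beta>. \<delta> + \<beta> \<in> C}"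
  unfolding sat_def using Tst_shift by (metis add.commute mem_Collect_eq)

definition Zgood :: "nat \<Rightarrow> ('n, 'r::comm_ring_1) mpoly \<Rightarrow> bool" where
  "Zgood d q \<longleftrightarrow> q \<in> poly_ring S \<and> (\<forall>C. sat d C \<longrightarrow> phi C q = 0)"

lemma Z_mult:
  fixes r q :: "('n, 'r::comm_ring_1) mpoly"
  assumes r: "r \<in> poly_ring S" and q: "Zgood d q"
  shows "Zgood d (r * q)"
proof -
  have qR: "q \<in> poly_ring S" and qz: "\<And>C. sat d C \<Longrightarrow> phi C q = 0" using q unfolding Zgood_def by auto
  have "r * q = (\<Sum>\<delta>\<in>ks r. Poly_Mapping.single \<delta> (lk r \<delta>)) * q" using poly_expand[of r] by simp
  also have "\<dots> = (\<Sum>\<delta>\<in>ks r. Poly_Mapping.single \<delta> (lk r \<delta>) * q)" by (simp only: sum_distrib_right)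
  finally have e: "r * q = \<dots>" .
  have "phi C (r * q) = 0" if C: "sat d C" for C
  proof -
    have "phi C (r * q) = (\<Sum>\<delta>\<in>ks r. lk r \<delta> * phi {\<beta>. \<delta> + \<beta> \<in> C} q)"
      unfolding e phi_sumf phi_shift ..
    also have "\<dots> = 0"
    proof (rule sum.neutral, rule ballI)
      fix \<delta> assume "\<delta> \<in> ks r"
      then have "is_fact S \<delta>" using r unfolding poly_ring_def by blast
      then have "sat d {\<beta>. \<delta> + \<beta> \<in> C}" using C by (rule sat_shift)
      then show "lk r \<delta> * phi {\<beta>. \<delta> + \<beta> \<in> C} q = 0" using qz by simp
    qed
    finally show ?thesis .
  qed
  moreover have "r * q \<in> poly_ring S" using r qR by (rule poly_ring_mult)
  ultimately show ?thesis unfolding Zgood_def by blast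
qed

lemma Z_gen:
  fixes q :: "('n, 'r::comm_ring_1) mpoly"
  assumes "q \<in> Gd d"
  shows "Zgood d q"
proof -
  obtain e where qR: "q \<in> poly_ring S" and q0: "pi_R q = 0" and e: "e \<le> d" and h: "homogeneous deg e q"
    using assms unfolding Gd_def ker_pi_def by blast
  have fk: "is_fact S \<alpha>" if "\<alpha> \<in> ks q" for \<alpha> using qR that unfolding poly_ring_def by blast
  have ge: "gr_len deg \<alpha> = e" if "\<alpha> \<in> ks q" for \<alpha> using h that unfolding homogeneous_def by blast
  have "phi C q = 0" if C: "sat d C" for C
  proof -
    let ?A = "{a\<in>ks q. a \<in> C}"
    have "phi C q = (\<Sum>s\<in>atom_pow ` ?A. \<Sum>a\<in>{x. x \<in> ?A \<and> atom_pow x = s}. lk q a)"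
      unfolding phi_def by (rule sum.image_gen) simp
    also have "\<dots> = (\<Sum>s\<in>atom_pow ` ?A. lk (pi_R q) s)"
    proof (rule sum.cong[OF refl])
      fix s assume "s \<in> atom_pow ` ?A"
      then obtain a0 where a0: "a0 \<in> ks q" "a0 \<in> C" "s = atom_pow a0" by blast
      have "{x. x \<in> ?A \<and> atom_pow x = s} = {x\<in>ks q. atom_pow x = s}"
      proof (intro set_eqI iffI)
        fix x assume "x \<in> {x\<in>ks q. atom_pow x = s}"
        then have x: "x \<in> ks q" "atom_pow x = s" by auto
        have "Tst d a0 x" unfolding Tst_def d_gr_def
        proof (intro conjI)
          show "is_fact S a0" "is_fact S x" using fk a0(1) x(1) by auto
          show "atom_pow a0 = atom_pow x" using a0(3) x(2) by simp
          have "gr_len_diff deg a0 x \<le> e" using gr_len_diff_le[of deg a0 x] ge[OF a0(1)] by simp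
          moreover have "gr_len_diff deg x a0 \<le> e" using gr_len_diff_le[of deg x a0] ge[OF x(1)] by simp
          ultimately show "max (gr_len_diff deg a0 x) (gr_len_diff deg x a0) \<le> d" using e by simp
        qed
        then have "x \<in> C" using C a0(2) unfolding sat_def by blast
        then show "x \<in> {x. x \<in> ?A \<and> atom_pow x = s}" using x by simp
      qed auto
      then show "(\<Sum>a\<in>{x. x \<in> ?A \<and> atom_pow x = s}. lk q a) = lk (pi_R q) s"
        by (simp add: lookup_pi_R)
    qed
    also have "\<dots> = 0" using q0 by simp
    finally show ?thesis .
  qed
  then show ?thesis unfolding Zgood_def using qR by blast
qed

lemma Z_ig:
  fixes x :: "('n, 'r::comm_ring_1) mpoly"
  assumes "x \<in> ideal_gen S (Gd d)" "sat d C"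
  shows "phi C x = 0"
proof -
  obtain H c where 1: "x = (\<Sum>g\<in>H. c g * g)" "finite H" "H \<subseteq> Gd d" "\<forall>g\<in>H. c g \<in> poly_ring S"
    using assms(1) unfolding ig_iff by blast
  have "phi C (c g * g) = 0" if "g \<in> H" for g
  proof -
    have "Zgood d g" using Z_gen 1(3) that by blast
    then have "Zgood d (c g * g)" using Z_mult 1(4) that by blast
    then show ?thesis using assms(2) unfolding Zgood_def by blast
  qed
  then show ?thesis unfolding 1(1) phi_sumf by simp
qed

lemma P3:
  assumes one: "(1::'r::comm_ring_1) \<noteq> 0"
    and ker: "(ker_pi S :: ('n, 'r) mpoly set) = ideal_gen S (Gd d)"
  shows "cgr_bound S deg d"
proof (rule cgr_bound_of)
  fix \<alpha> \<gamma> assume fa: "is_fact S \<alpha>" and fg: "is_fact S \<gamma>" and eq: "atom_pow \<alpha> = atom_pow \<gamma>"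
  define x where "x = Poly_Mapping.single \<alpha> (1::'r) - Poly_Mapping.single \<gamma> 1"
  have "x \<in> ker_pi S" unfolding ker_pi_def x_def
    using poly_ring_diff[OF poly_ring_single[OF fa] poly_ring_single[OF fg]]
    by (simp add: pi_R_diff pi_R_single eq)
  then have xi: "x \<in> ideal_gen S (Gd d)" using ker by simp
  define C where "C = {y. (Tst d)\<^sup>*\<^sup>* \<alpha> y}"
  have sC: "sat d C" unfolding sat_def C_def
  proof (intro allI impI)
    fix y z assume yz: "Tst d y z"
    have zy: "Tst d z y" using yz by (rule Tst_sym)
    have "(Tst d)\<^sup>*\<^sup>* \<alpha> y \<longleftrightarrow> (Tst d)\<^sup>*\<^sup>* \<alpha> z"
      using rtranclp.rtrancl_into_rtrancl[of "Tst d" \<alpha> y z, OF _ yz]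
        rtranclp.rtrancl_into_rtrancl[of "Tst d" \<alpha> z y, OF _ zy] by blast
    then show "y \<in> {y. (Tst d)\<^sup>*\<^sup>* \<alpha> y} \<longleftrightarrow> z \<in> {y. (Tst d)\<^sup>*\<^sup>* \<alpha> y}" by simp
  qed
  have "phi C x = 0" using Z_ig[OF xi sC] .
  moreover have "\<alpha> \<in> C" unfolding C_def by simp
  ultimately have "\<gamma> \<in> C" unfolding x_def phi_diff phi_single using one by (auto split: if_splits)
  then show "(Tst d)\<^sup>*\<^sup>* \<alpha> \<gamma>" unfolding C_def by simp
qed

end

theorem corollary3p3:
  fixes S :: "('n::finite \<Rightarrow> int) set" and deg :: "('n \<Rightarrow> int) \<Rightarrow> nat"
  assumes "affine_monoid S" and "reduced_monoid S" and "connected_graded S deg"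
    and "(1::'r::comm_ring_1) \<noteq> 0"
  shows "c_gr S deg = mu S deg (ker_pi S :: ('n, 'r) mpoly set)"
proof -
  interpret grmon S deg using assms(1-3) by unfold_locales
  let ?Q = "\<lambda>d. (ker_pi S :: ('n, 'r) mpoly set) = ideal_gen S {p \<in> ker_pi S. \<exists>e\<le>d. homogeneous deg e p}"
  have GdE: "Gd d = {p \<in> (ker_pi S :: ('n, 'r) mpoly set). \<exists>e\<le>d. homogeneous deg e p}" for d
    by (simp add: Gd_def)
  have cb: "cgr_bound S deg (c_gr S deg)"
    unfolding c_gr_def using exists_bound by (rule LeastI_ex)
  have Qc: "?Q (c_gr S deg)" using P2[OF cb, where 'r = 'r] by (simp only: GdE)
  have le1: "mu S deg (ker_pi S :: ('n, 'r) mpoly set) \<le> c_gr S deg"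
    unfolding mu_def using Qc by (rule Least_le)
  have Qm: "?Q (mu S deg (ker_pi S :: ('n, 'r) mpoly set))"
    unfolding mu_def using Qc by (rule LeastI)
  have "cgr_bound S deg (mu S deg (ker_pi S :: ('n, 'r) mpoly set))"
    by (rule P3[OF assms(4)]) (use Qm in \<open>simp only: GdE\<close>)
  then have le2: "c_gr S deg \<le> mu S deg (ker_pi S :: ('n, 'r) mpoly set)"
    unfolding c_gr_def by (rule Least_le)
  show ?thesis using le1 le2 by simp
qed

end
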